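(* Let $\lambda_1\ge\dots\ge\lambda_r>0>\lambda_{r+1}\ge\dots\ge\lambda_n$, $\Lambda_X=\operatorname{diag}(\lambda_1,\dots,\lambda_r)$, $\Lambda_S=\operatorname{diag}(\lambda_{r+1},\dots,\lambda_n)$, $d=\sqrt{\min\{r,n-r\}}$. Let $H_X\in\mathbb S^r$, $H_S\in\mathbb S^{n-r}$, $H_O\in\mathbb R^{(n-r)\times r}$ satisfy $\|H_X\|_2+\|H_S\|_2\le\frac{\lambda_r-\lambda_{r+1}}{2nd}$, and let $W_O^{(0)}$ be the solution of $W_O(\Lambda_X+H_X)-(\Lambda_S+H_S)W_O=H_O$. Then $$\|W_O^{(0)}-\Theta_0\circ H_O\|_2\le\frac{2nd}{(\lambda_r-\lambda_{r+1})^2}\|H_O\|_2(\|H_X\|_2+\|H_S\|_2),$$ where $\Theta_0\in\mathbb R^{(n-r)\times r}$ has entries $(\Theta_0)_{ij}=\frac{1}{\lambda_j-\lambda_{r+i}}$.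
   Context: $\mathbb S^p$ denotes real symmetric $p\times p$ matrices; $\|\cdot\|_2$ is the spectral norm; $\circ$ is the Hadamard product. *)

theory Defs
  imports Complex_Main
begin

text \<open>Matrices are represented as functions nat \<Rightarrow> nat \<Rightarrow> real with explicit
  dimensions; an m x p matrix A has entries A i j for i < m, j < p (0-based).\<close>

definition specnorm :: "nat \<Rightarrow> nat \<Rightarrow> (nat \<Rightarrow> nat \<Rightarrow> real) \<Rightarrow> real" where
  "specnorm m p A = Sup {sqrt (\<Sum>i<m. (\<Sum>j<p. A i j * x j)^2) | x.
                            (\<Sum>j<p. (x j)^2) \<le> 1}"

definition symmetric_mat :: "nat \<Rightarrow> (nat \<Rightarrow> nat \<Rightarrow> real) \<Rightarrow> bool" where
  "symmetric_mat k A \<longleftrightarrow> (\<forall>i<k. \<forall>j<k. A i j = A j i)"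

definition diag_mat :: "(nat \<Rightarrow> real) \<Rightarrow> nat \<Rightarrow> nat \<Rightarrow> real" where
  "diag_mat v i j = (if i = j then v i else 0)"

end

theory Submission imports Defs "HOL-Analysis.L2_Norm" begin

definition mv :: "nat \<Rightarrow> (nat \<Rightarrow> nat \<Rightarrow> real) \<Rightarrow> (nat \<Rightarrow> real) \<Rightarrow> nat \<Rightarrow> real" where
  "mv p A x i = (\<Sum>j<p. A i j * x j)"

definition fro :: "nat \<Rightarrow> nat \<Rightarrow> (nat \<Rightarrow> nat \<Rightarrow> real) \<Rightarrow> real" where
  "fro m p A = sqrt (\<Sum>i<m. \<Sum>j<p. (A i j)^2)"

lemma specnorm_alt:
  "specnorm m p A = Sup {L2_set (mv p A x) {..<m} | x. L2_set x {..<p} \<le> 1}"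
  unfolding specnorm_def L2_set_def mv_def by simp

lemma fro_row: "fro m p A = L2_set (\<lambda>i. L2_set (A i) {..<p}) {..<m}"
  unfolding fro_def L2_set_def by (simp add: sum_nonneg)

lemma mv_bound_fro:
  "L2_set (mv p A x) {..<m} \<le> fro m p A * L2_set x {..<p}"
proof -
  have "(mv p A x i)^2 \<le> (L2_set (A i) {..<p} * L2_set x {..<p})^2" for i
  proof -
    have "\<bar>mv p A x i\<bar> \<le> (\<Sum>j<p. \<bar>A i j\<bar> * \<bar>x j\<bar>)"
      unfolding mv_def by (rule order_trans[OF sum_abs]) (simp add: abs_mult)
    also have "\<dots> \<le> L2_set (A i) {..<p} * L2_set x {..<p}" by (rule L2_set_mult_ineq)
    finally show ?thesis
      by (metis abs_ge_zero order_trans power2_abs power_mono)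
  qed
  hence "L2_set (mv p A x) {..<m} \<le> L2_set (\<lambda>i. L2_set (A i) {..<p} * L2_set x {..<p}) {..<m}"
    unfolding L2_set_def by (intro real_sqrt_le_mono sum_mono) auto
  also have "\<dots> = fro m p A * L2_set x {..<p}"
    by (simp add: fro_row L2_set_left_distrib)
  finally show ?thesis .
qed

lemma L2_le1: "L2_set x {..<p} \<le> 1 \<Longrightarrow> L2_set (mv p A x) {..<m} \<le> fro m p A"
  using mv_bound_fro[of p A x m]
  by (smt (verit, best) L2_set_nonneg fro_row mult_left_le)

lemma spec_bdd: "bdd_above {L2_set (mv p A x) {..<m} | x. L2_set x {..<p} \<le> 1}"
  unfolding bdd_above_def using L2_le1 by blast

lemma spec_ne: "{L2_set (mv p A x) {..<m} | x. L2_set x {..<p} \<le> 1} \<noteq> {}"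
proof -
  have "L2_set (\<lambda>_. 0::real) {..<p} \<le> 1" by (simp add: L2_set_def)
  thus ?thesis by blast
qed

lemma spec_ge: "L2_set x {..<p} \<le> 1 \<Longrightarrow> L2_set (mv p A x) {..<m} \<le> specnorm m p A"
  unfolding specnorm_alt by (rule cSup_upper[OF _ spec_bdd]) blast

lemma spec_nonneg: "0 \<le> specnorm m p A"
proof -
  have "L2_set (\<lambda>_. 0::real) {..<p} \<le> 1" by (simp add: L2_set_def)
  from spec_ge[OF this] show ?thesis by (meson L2_set_nonneg order_trans)
qed

lemma spec_least:
  assumes "\<And>x. L2_set x {..<p} \<le> 1 \<Longrightarrow> L2_set (mv p A x) {..<m} \<le> c"
  shows "specnorm m p A \<le> c"
  unfolding specnorm_alt by (rule cSup_least[OF spec_ne]) (use assms in blast)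

lemma spec_le_fro: "specnorm m p A \<le> fro m p A"
  by (rule spec_least) (rule L2_le1)

lemma spec_bound: "L2_set (mv p A x) {..<m} \<le> specnorm m p A * L2_set x {..<p}"
proof (cases "L2_set x {..<p} = 0")
  case True
  hence "\<forall>j\<in>{..<p}. x j = 0" by (simp add: L2_set_eq_0_iff)
  hence "\<forall>i. mv p A x i = 0" unfolding mv_def by simp
  hence "L2_set (mv p A x) {..<m} = 0" by (simp add: L2_set_def)
  thus ?thesis using True by simp
next
  case False
  define c where "c = L2_set x {..<p}"
  have c: "c > 0" using False c_def by (simp add: order_le_neq_trans)
  define y where "y = (\<lambda>j. (1/c) * x j)"
  have "L2_set y {..<p} = (1/c) * c" unfolding y_def c_def
    by (rule L2_set_right_distrib[symmetric]) (use c in simp)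
  hence "L2_set y {..<p} \<le> 1" using c by simp
  hence "L2_set (mv p A y) {..<m} \<le> specnorm m p A" by (rule spec_ge)
  moreover have "mv p A y = (\<lambda>i. (1/c) * mv p A x i)"
    unfolding mv_def y_def by (auto simp: sum_distrib_left algebra_simps)
  moreover have "L2_set (\<lambda>i. (1/c) * mv p A x i) {..<m} = (1/c) * L2_set (mv p A x) {..<m}"
    by (rule L2_set_right_distrib[symmetric]) (use c in simp)
  ultimately have "(1/c) * L2_set (mv p A x) {..<m} \<le> specnorm m p A" by simp
  thus ?thesis using c unfolding c_def[symmetric] by (simp add: field_simps)
qed

lemma spec_cong:
  assumes "\<And>i j. i < m \<Longrightarrow> j < p \<Longrightarrow> A i j = B i j"
  shows "specnorm m p A = specnorm m p B"
  unfolding specnorm_def using assms by (intro arg_cong[where f=Sup]) (auto intro!: sum.cong)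

lemma spec_add: "specnorm m p (\<lambda>i j. A i j + B i j) \<le> specnorm m p A + specnorm m p B"
proof (rule spec_least)
  fix x assume x: "L2_set x {..<p} \<le> 1"
  have "mv p (\<lambda>i j. A i j + B i j) x = (\<lambda>i. mv p A x i + mv p B x i)"
    unfolding mv_def by (auto simp: sum.distrib algebra_simps)
  hence "L2_set (mv p (\<lambda>i j. A i j + B i j) x) {..<m} \<le> L2_set (mv p A x) {..<m} + L2_set (mv p B x) {..<m}"
    by (simp add: L2_set_triangle_ineq)
  also have "\<dots> \<le> specnorm m p A + specnorm m p B" using spec_ge[OF x] by (simp add: add_mono)
  finally show "L2_set (mv p (\<lambda>i j. A i j + B i j) x) {..<m} \<le> specnorm m p A + specnorm m p B" .
qed

lemma spec_neg: "specnorm m p (\<lambda>i j. - A i j) = specnorm m p A"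
  unfolding specnorm_def by (simp add: sum_negf)

lemma spec_diff: "specnorm m p (\<lambda>i j. A i j - B i j) \<le> specnorm m p A + specnorm m p B"
  using spec_add[of m p A "\<lambda>i j. - B i j"] spec_neg[of m p B] by simp

lemma spec_mult: "specnorm m p (\<lambda>i j. \<Sum>k<q. A i k * B k j) \<le> specnorm m q A * specnorm q p B"
proof (rule spec_least)
  fix x assume x: "L2_set x {..<p} \<le> 1"
  have "mv p (\<lambda>i j. \<Sum>k<q. A i k * B k j) x = mv q A (mv p B x)"
    unfolding mv_def by (auto simp: sum_distrib_left sum_distrib_right mult.assoc intro: sum.swap)
  hence "L2_set (mv p (\<lambda>i j. \<Sum>k<q. A i k * B k j) x) {..<m} \<le> specnorm m q A * L2_set (mv p B x) {..<q}"
    using spec_bound by simp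
  also have "\<dots> \<le> specnorm m q A * specnorm q p B"
    using spec_ge[OF x] spec_nonneg by (simp add: mult_left_mono)
  finally show "L2_set (mv p (\<lambda>i j. \<Sum>k<q. A i k * B k j) x) {..<m} \<le> specnorm m q A * specnorm q p B" .
qed

lemma col_bound: "j < p \<Longrightarrow> (\<Sum>i<m. (A i j)^2) \<le> (specnorm m p A)^2"
proof -
  assume j: "j < p"
  define x where "x = (\<lambda>k. if k = j then 1 else 0::real)"
  have "L2_set x {..<p} = 1" unfolding x_def L2_set_def using j
    by (simp add: if_distrib[of "\<lambda>t. t^2"] sum.delta cong: if_cong)
  hence "L2_set (mv p A x) {..<m} \<le> specnorm m p A" by (simp add: spec_ge)
  moreover have "mv p A x = (\<lambda>i. A i j)" unfolding mv_def x_def using j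
    by (auto simp: if_distrib[of "\<lambda>t. _ * t"] sum.delta cong: if_cong)
  ultimately have "sqrt (\<Sum>i<m. (A i j)^2) \<le> specnorm m p A" by (simp add: L2_set_def)
  hence "(sqrt (\<Sum>i<m. (A i j)^2))^2 \<le> (specnorm m p A)^2" by (intro power_mono) (auto simp: sum_nonneg)
  thus ?thesis by (simp add: sum_nonneg)
qed

lemma row_bound: "i < m \<Longrightarrow> (\<Sum>j<p. (A i j)^2) \<le> (specnorm m p A)^2"
proof -
  assume i: "i < m"
  define L where "L = L2_set (A i) {..<p}"
  have "mv p A (A i) i = L^2" unfolding mv_def L_def L2_set_def
    by (simp add: sum_nonneg power2_eq_square)
  moreover have "mv p A (A i) i \<le> L2_set (mv p A (A i)) {..<m}" using i by (intro member_le_L2_set) auto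
  ultimately have "L^2 \<le> L2_set (mv p A (A i)) {..<m}" by simp
  also have "\<dots> \<le> specnorm m p A * L" unfolding L_def by (rule spec_bound)
  finally have "L^2 \<le> specnorm m p A * L" .
  hence "L \<le> specnorm m p A" using spec_nonneg[of m p A]
    by (cases "L = 0") (auto simp: power2_eq_square L_def order_le_neq_trans)
  hence "L^2 \<le> (specnorm m p A)^2" by (simp add: L_def power_mono)
  thus ?thesis unfolding L_def L2_set_def by (simp add: sum_nonneg)
qed

lemma fro_le: "fro m p A \<le> sqrt (real (min m p)) * specnorm m p A"
proof -
  have S: "(\<Sum>i<m. \<Sum>j<p. (A i j)^2) \<le> real (min m p) * (specnorm m p A)^2"
  proof (cases "m \<le> p")
    case True
    have "(\<Sum>i<m. \<Sum>j<p. (A i j)^2) \<le> (\<Sum>i<m. (specnorm m p A)^2)"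
      by (rule sum_mono) (simp add: row_bound)
    thus ?thesis using True by simp
  next
    case False
    have "(\<Sum>i<m. \<Sum>j<p. (A i j)^2) = (\<Sum>j<p. \<Sum>i<m. (A i j)^2)" by (rule sum.swap)
    also have "\<dots> \<le> (\<Sum>j<p. (specnorm m p A)^2)"
      by (rule sum_mono) (simp add: col_bound)
    finally show ?thesis using False by simp
  qed
  have "fro m p A \<le> sqrt (real (min m p) * (specnorm m p A)^2)"
    unfolding fro_def using S by simp
  also have "\<dots> = sqrt (real (min m p)) * specnorm m p A"
    using spec_nonneg[of m p A] by (simp add: real_sqrt_mult)
  finally show ?thesis .
qed

lemma had_fro:
  assumes "0 \<le> c" "\<And>i j. i < m \<Longrightarrow> j < p \<Longrightarrow> \<bar>T i j\<bar> \<le> c"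
  shows "fro m p (\<lambda>i j. T i j * A i j) \<le> c * fro m p A"
proof -
  have "(\<Sum>i<m. \<Sum>j<p. (T i j * A i j)^2) \<le> (\<Sum>i<m. \<Sum>j<p. c^2 * (A i j)^2)"
  proof (intro sum_mono)
    fix i j assume "i \<in> {..<m}" "j \<in> {..<p}"
    hence "\<bar>T i j\<bar> \<le> c" using assms by simp
    hence "\<bar>T i j\<bar>^2 \<le> c^2" by (rule power_mono) simp
    hence "(T i j)^2 \<le> c^2" by simp
    thus "(T i j * A i j)^2 \<le> c^2 * (A i j)^2"
      by (simp add: power_mult_distrib mult_right_mono)
  qed
  hence "fro m p (\<lambda>i j. T i j * A i j) \<le> sqrt (c^2 * (\<Sum>i<m. \<Sum>j<p. (A i j)^2))"
    unfolding fro_def by (simp add: sum_distrib_left)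
  also have "\<dots> = c * fro m p A" unfolding fro_def using assms(1) by (simp add: real_sqrt_mult)
  finally show ?thesis .
qed

lemma had_spec:
  assumes "0 \<le> c" "\<And>i j. i < m \<Longrightarrow> j < p \<Longrightarrow> \<bar>T i j\<bar> \<le> c"
  shows "specnorm m p (\<lambda>i j. T i j * A i j) \<le> c * sqrt (real (min m p)) * specnorm m p A"
proof -
  have "specnorm m p (\<lambda>i j. T i j * A i j) \<le> c * fro m p A"
    using order_trans[OF spec_le_fro had_fro[OF assms]] .
  also have "\<dots> \<le> c * (sqrt (real (min m p)) * specnorm m p A)"
    using assms(1) fro_le by (rule mult_left_mono[rotated])
  finally show ?thesis by (simp add: mult.assoc)
qed

lemma diag_sum: "j < r \<Longrightarrow> (\<Sum>k<r. W k * (diag_mat v k j + H k j)) = W j * v j + (\<Sum>k<r. W k * H k j)"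
proof -
  assume j: "j < r"
  have "(\<Sum>k<r. W k * (diag_mat v k j + H k j)) = (\<Sum>k<r. W k * diag_mat v k j) + (\<Sum>k<r. W k * H k j)"
    by (simp only: distrib_left sum.distrib)
  also have "(\<Sum>k<r. W k * diag_mat v k j) = (\<Sum>k<r. (if k = j then W j * v j else 0))"
    by (rule sum.cong) (auto simp: diag_mat_def)
  also have "\<dots> = W j * v j"
    using j by (subst sum.delta) auto
  finally show ?thesis .
qed

lemma diag_sum2: "i < s \<Longrightarrow> (\<Sum>k<s. (diag_mat v i k + H i k) * W k) = v i * W i + (\<Sum>k<s. H i k * W k)"
proof -
  assume i: "i < s"
  have "(\<Sum>k<s. (diag_mat v i k + H i k) * W k) = (\<Sum>k<s. diag_mat v i k * W k) + (\<Sum>k<s. H i k * W k)"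
    by (simp only: distrib_right sum.distrib)
  also have "(\<Sum>k<s. diag_mat v i k * W k) = (\<Sum>k<s. (if k = i then v i * W i else 0))"
    by (rule sum.cong) (auto simp: diag_mat_def)
  also have "\<dots> = v i * W i"
    using i by (subst sum.delta) auto
  finally show ?thesis .
qed

theorem lemma14:
  fixes n r :: nat and lam :: "nat \<Rightarrow> real"
    and HX HS HO W :: "nat \<Rightarrow> nat \<Rightarrow> real"
  assumes sorted: "\<forall>i j. 1 \<le> i \<longrightarrow> i \<le> j \<longrightarrow> j \<le> n \<longrightarrow> lam j \<le> lam i"
    and r_pos: "1 \<le> r" and r_lt: "r < n"
    and lam_r: "lam r > 0" and lam_r1: "lam (r + 1) < 0"
    and HX_sym: "symmetric_mat r HX" and HS_sym: "symmetric_mat (n - r) HS"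
    and small: "specnorm r r HX + specnorm (n - r) (n - r) HS
                  \<le> (lam r - lam (r + 1)) / (2 * n * sqrt (min r (n - r)))"
    and sylv: "\<forall>i < n - r. \<forall>j < r.
        (\<Sum>k<r. W i k * (diag_mat (\<lambda>t. lam (t + 1)) k j + HX k j))
      - (\<Sum>k<n - r. (diag_mat (\<lambda>t. lam (r + t + 1)) i k + HS i k) * W k j)
      = HO i j"
  shows "specnorm (n - r) r (\<lambda>i j. W i j - HO i j / (lam (j + 1) - lam (r + i + 1)))
     \<le> 2 * n * sqrt (min r (n - r)) / (lam r - lam (r + 1))^2
         * specnorm (n - r) r HO * (specnorm r r HX + specnorm (n - r) (n - r) HS)"
proof -
  define m where "m = n - r"
  define \<delta> where "\<delta> = lam r - lam (r + 1)"
  have \<delta>: "\<delta> > 0" using lam_r lam_r1 \<delta>_def by simp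
  define den where "den = (\<lambda>i j. lam (j + 1) - lam (r + i + 1))"
  define Th where "Th = (\<lambda>i j. 1 / den i j)"
  have den_ge: "den i j \<ge> \<delta>" if "i < m" "j < r" for i j
  proof -
    have "lam r \<le> lam (j + 1)" using sorted that r_lt by auto
    moreover have "lam (r + i + 1) \<le> lam (r + 1)" using sorted that r_lt m_def by auto
    ultimately show ?thesis unfolding den_def \<delta>_def by simp
  qed
  have Th_le: "\<bar>Th i j\<bar> \<le> 1 / \<delta>" if "i < m" "j < r" for i j
    using den_ge[OF that] \<delta> unfolding Th_def by (simp add: frac_le)
  have c0: "0 \<le> 1 / \<delta>" using \<delta> by simp
  define d where "d = sqrt (real (min m r))"
  have dmin: "min r (n - r) = min m r" unfolding m_def by simp
  have d1: "d \<ge> 1" unfolding d_def m_def using r_pos r_lt by simp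
  have dn: "d \<le> real n"
  proof -
    have "d \<le> sqrt (real n)" unfolding d_def m_def by simp
    also have "\<dots> \<le> sqrt (real n * real n)" using r_lt by (intro real_sqrt_le_mono) simp
    also have "\<dots> = real n" by simp
    finally show ?thesis .
  qed
  define M where "M = (\<lambda>i j. (\<Sum>k<m. HS i k * W k j) - (\<Sum>k<r. W i k * HX k j))"
  define D where "D = (\<lambda>i j. W i j - HO i j / den i j)"
  define W0 where "W0 = (\<lambda>i j. HO i j / den i j)"
  have keyD: "D i j = Th i j * M i j" if "i < m" "j < r" for i j
  proof -
    have "den i j > 0" using den_ge[OF that] \<delta> by simp
    have e: "HO i j = (\<Sum>k<r. W i k * (diag_mat (\<lambda>t. lam (t + 1)) k j + HX k j))
      - (\<Sum>k<m. (diag_mat (\<lambda>t. lam (r + t + 1)) i k + HS i k) * W k j)"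
      using sylv that unfolding m_def by simp
    have "HO i j = W i j * lam (j + 1) + (\<Sum>k<r. W i k * HX k j)
         - (lam (r + i + 1) * W i j + (\<Sum>k<m. HS i k * W k j))"
      unfolding e diag_sum[OF that(2), of "W i" "\<lambda>t. lam (t + 1)" HX]
        diag_sum2[OF that(1), of "\<lambda>t. lam (r + t + 1)" HS "\<lambda>k. W k j"]
      by simp
    hence "HO i j = W i j * den i j - M i j" unfolding den_def M_def by (simp add: algebra_simps)
    thus ?thesis unfolding D_def Th_def using \<open>den i j > 0\<close> by (simp add: field_simps)
  qed
  have S1: "specnorm m r D \<le> 1 / \<delta> * d * specnorm m r M"
  proof -
    have "specnorm m r D = specnorm m r (\<lambda>i j. Th i j * M i j)"
      by (rule spec_cong) (simp add: keyD)
    also have "\<dots> \<le> 1 / \<delta> * d * specnorm m r M" unfolding d_def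
      by (rule had_spec[OF c0 Th_le])
    finally show ?thesis .
  qed
  have S2: "specnorm m r M \<le> specnorm m m HS * specnorm m r W + specnorm m r W * specnorm r r HX"
  proof -
    have "specnorm m r M \<le> specnorm m r (\<lambda>i j. \<Sum>k<m. HS i k * W k j) + specnorm m r (\<lambda>i j. \<Sum>k<r. W i k * HX k j)"
      unfolding M_def by (rule spec_diff)
    also have "\<dots> \<le> specnorm m m HS * specnorm m r W + specnorm m r W * specnorm r r HX"
      by (intro add_mono spec_mult)
    finally show ?thesis .
  qed
  have S3: "specnorm m r W \<le> specnorm m r W0 + specnorm m r D"
  proof -
    have "specnorm m r W = specnorm m r (\<lambda>i j. W0 i j + D i j)"
      by (rule spec_cong) (simp add: W0_def D_def)
    also have "\<dots> \<le> specnorm m r W0 + specnorm m r D" by (rule spec_add)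
    finally show ?thesis .
  qed
  have S4: "specnorm m r W0 \<le> 1 / \<delta> * d * specnorm m r HO"
  proof -
    have "specnorm m r W0 = specnorm m r (\<lambda>i j. Th i j * HO i j)"
      by (rule spec_cong) (simp add: W0_def Th_def)
    also have "\<dots> \<le> 1 / \<delta> * d * specnorm m r HO" unfolding d_def
      by (rule had_spec[OF c0 Th_le])
    finally show ?thesis .
  qed
  define a where "a = d / \<delta>"
  define h where "h = specnorm r r HX + specnorm m m HS"
  define x where "x = specnorm m r D"
  define w where "w = specnorm m r W"
  define ho where "ho = specnorm m r HO"
  have a0: "a > 0" using d1 \<delta> a_def by simp
  have h0: "h \<ge> 0" unfolding h_def using spec_nonneg by (simp add: add_nonneg_nonneg)
  have o0: "ho \<ge> 0" unfolding ho_def using spec_nonneg by simp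
  have x0: "x \<ge> 0" unfolding x_def using spec_nonneg by simp
  have hs: "h \<le> \<delta> / (2 * n * d)" using small unfolding h_def d_def \<delta>_def dmin m_def by simp
  have ah: "a * h \<le> 1 / 2"
  proof -
    have "a * h \<le> a * (\<delta> / (2 * n * d))" using mult_left_mono[OF hs] a0 by simp
    also have "\<dots> = 1 / (2 * n)" unfolding a_def using d1 \<delta> by (simp add: field_simps)
    also have "\<dots> \<le> 1 / 2" using r_lt by (simp add: frac_le)
    finally show ?thesis .
  qed
  have E1: "x \<le> a * (h * w)"
  proof -
    have "x \<le> a * specnorm m r M" using S1 unfolding x_def a_def by simp
    also have "\<dots> \<le> a * (h * w)" using S2 a0 unfolding h_def w_def
      by (intro mult_left_mono) (simp_all add: algebra_simps)
    finally show ?thesis .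
  qed
  have E2: "w \<le> a * ho + x" using S3 S4 unfolding w_def x_def ho_def a_def by simp
  have "h * w \<le> h * (a * ho + x)" using mult_left_mono[OF E2 h0] .
  hence "a * (h * w) \<le> a * (h * (a * ho + x))" using mult_left_mono[of "h * w" _ a] a0 by simp
  hence "x \<le> a * (h * (a * ho + x))" using E1 by linarith
  hence "x * (1 - a * h) \<le> a * a * h * ho" by (simp add: algebra_simps)
  moreover have "x / 2 \<le> x * (1 - a * h)" using mult_left_mono[of "1/2" "1 - a * h" x] ah x0 by simp
  ultimately have "x \<le> 2 * (a * a) * h * ho" by linarith
  also have "\<dots> \<le> 2 * (real n * d / \<delta>^2) * h * ho"
  proof -
    have "a * a \<le> real n * d / \<delta>^2" unfolding a_def using dn d1 \<delta>
      by (simp add: power2_eq_square divide_right_mono mult_right_mono)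
    hence "a * a * (h * ho) \<le> real n * d / \<delta>^2 * (h * ho)"
      using h0 o0 by (intro mult_right_mono) simp_all
    thus ?thesis by (simp add: mult.assoc)
  qed
  finally have X: "x \<le> 2 * (real n * d / \<delta>^2) * h * ho" .
  have E1: "specnorm (n - r) r (\<lambda>i j. W i j - HO i j / (lam (j + 1) - lam (r + i + 1))) = x"
    unfolding x_def D_def den_def m_def by simp
  have E2: "sqrt (min r (n - r)) = d" unfolding d_def dmin by simp
  have E3: "lam r - lam (r + 1) = \<delta>" unfolding \<delta>_def by simp
  have E4: "specnorm (n - r) r HO = ho" unfolding ho_def m_def by simp
  have E5: "specnorm r r HX + specnorm (n - r) (n - r) HS = h" unfolding h_def m_def by simp
  have E6: "2 * (real n * d / \<delta>^2) * h * ho = real (2 * n) * d / \<delta>^2 * ho * h"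
    by simp
  show ?thesis unfolding E1 E2 E3 E4 E5 using X unfolding E6 .
qed

end
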